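(* Let $\Lambda=(\mathbb{Z}/L_1)\times(\mathbb{Z}/L_2)\times(\mathbb{Z}/L_3)\times(\mathbb{Z}/L_4)$ be a periodic four-dimensional lattice. Fix a direction $\mu\in\{1,2,3,4\}$ and assume $L_\mu$ is even. Let $U$ be a gauge field, i.e. an assignment of a unitary $N_c\times N_c$ matrix $U_\nu(x)$ (e.g. in $SU(3)$) to each site $x$ and direction $\nu$. Let $\kappa$ satisfy $0<\kappa\le 1/8$, and let $D=I-M$ be the Wilson Dirac operator, acting on $\ell^2(\Lambda)\otimes\mathbb{C}^4\otimes\mathbb{C}^{N_c}$, with hopping term $$(M\psi)(x)=\kappa\sum_{\nu=1}^4\Big[(1-\gamma_\nu)\,U_\nu(x)\,\psi(x+\hat\nu)+(1+\gamma_\nu)\,U_\nu(x-\hat\nu)^\dagger\,\psi(x-\hat\nu)\Big].$$ Here the $\gamma_\nu$ are Hermitian Euclidean Dirac matrices. Split the sites into $b=\{x: x_\mu \text{ even}\}$ (the even three-dimensional slices transverse to $\mu$) and $r=\{x: x_\mu\text{ odd}\}$. After permuting the sites so that $b$-sites come first, write $$D=\begin{pmatrix} I_b-M_{bb} & -M_{br}\\ -M_{rb} & I_r-M_{rr}\end{pmatrix}.$$ Define the Schur complement $$S_{bb}=I_b-M_{bb}-M_{br}(I_r-M_{rr})^{-1}M_{rb}.$$ For each integer $k\ge 1$, define the order-$k$ approximation $$\tilde S^{(k)}_{bb}=I_b-\Big(M_{bb}+M_{br}\sum_{l=0}^{k-1}M_{rr}^{\,l}M_{rb}\Big).$$ Then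 the following hold for every $k\ge1$, with all norms the operator 2-norm. (i) $\|M_{rr}\|<1$, so $S_{bb}$ is well defined and $(I_r-M_{rr})^{-1}=\sum_{l\ge0}M_{rr}^l$. (Stability) $S_{bb}$ and $\tilde S^{(k)}_{bb}$ are non-negative in the sense below. More precisely, $$\Big\|M_{bb}+M_{br}\sum_{l=0}^{\infty}M_{rr}^lM_{rb}\Big\|\le 1,$$ $$\Big\|M_{bb}+M_{br}\sum_{l=0}^{k-1}M_{rr}^lM_{rb}\Big\|\le 1-\tfrac14\left(\tfrac34\right)^k.$$ (Weak regularity) $\tilde S^{(k)}_{bb}$ is invertible and $$\big\|I_b-(\tilde S^{(k)}_{bb})^{-1}S_{bb}\big\|\le 1.$$
   Context: An operator is called non-negative in this sense if it has the form $I-N$ with $\|N\|\le 1$, where $\|\cdot\|$ is the operator 2-norm. Under this definition the Wilson operator $D$ with $\kappa\le 1/8$ is non-negative. The blocks $M_{bb},M_{br},M_{rb},M_{rr}$ are the restrictions of $M$ between the indicated site subsets. In particular, $M_{br}$ and $M_{rb}$ consist only of the hopping terms in direction $\mu$, and $M_{bb}$ and $M_{rr}$ consist of the hopping terms in the three directions $\nu\ne\mu$. *)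

theory Defs
  imports Complex_Main
begin

text \<open>An operator between l2(Y) and l2(X), for finite index sets X, Y, is
represented by its kernel A :: 'i => 'i => complex; only the entries on X x Y matter.\<close>

definition idm :: "'i \<Rightarrow> 'i \<Rightarrow> complex" where
  "idm = (\<lambda>i j. if i = j then 1 else 0)"

definition blk :: "'i set \<Rightarrow> 'i set \<Rightarrow> ('i \<Rightarrow> 'i \<Rightarrow> complex) \<Rightarrow> 'i \<Rightarrow> 'i \<Rightarrow> complex" where
  "blk X Y A = (\<lambda>i j. if i \<in> X \<and> j \<in> Y then A i j else 0)"

definition mat_mult :: "'i set \<Rightarrow> ('i \<Rightarrow> 'i \<Rightarrow> complex) \<Rightarrow> ('i \<Rightarrow> 'i \<Rightarrow> complex)
    \<Rightarrow> 'i \<Rightarrow> 'i \<Rightarrow> complex" where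
  "mat_mult S A B = (\<lambda>i j. \<Sum>k\<in>S. A i k * B k j)"

fun mat_pow :: "'i set \<Rightarrow> ('i \<Rightarrow> 'i \<Rightarrow> complex) \<Rightarrow> nat \<Rightarrow> 'i \<Rightarrow> 'i \<Rightarrow> complex" where
  "mat_pow S A 0 = blk S S idm"
| "mat_pow S A (Suc n) = mat_mult S A (mat_pow S A n)"

definition mat_apply :: "'i set \<Rightarrow> ('i \<Rightarrow> 'i \<Rightarrow> complex) \<Rightarrow> ('i \<Rightarrow> complex) \<Rightarrow> 'i \<Rightarrow> complex" where
  "mat_apply Y A v = (\<lambda>i. \<Sum>j\<in>Y. A i j * v j)"

definition vnorm :: "'i set \<Rightarrow> ('i \<Rightarrow> complex) \<Rightarrow> real" where
  "vnorm X v = sqrt (\<Sum>i\<in>X. (cmod (v i))\<^sup>2)"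

definition opnorm :: "'i set \<Rightarrow> 'i set \<Rightarrow> ('i \<Rightarrow> 'i \<Rightarrow> complex) \<Rightarrow> real" where
  "opnorm X Y A = Sup ((\<lambda>v. vnorm X (mat_apply Y A v)) ` {v. vnorm Y v \<le> 1})"

definition invertible_on :: "'i set \<Rightarrow> ('i \<Rightarrow> 'i \<Rightarrow> complex) \<Rightarrow> bool" where
  "invertible_on S A \<longleftrightarrow> (\<exists>B. \<forall>i\<in>S. \<forall>j\<in>S.
      mat_mult S A B i j = idm i j \<and> mat_mult S B A i j = idm i j)"

definition inv_on :: "'i set \<Rightarrow> ('i \<Rightarrow> 'i \<Rightarrow> complex) \<Rightarrow> 'i \<Rightarrow> 'i \<Rightarrow> complex" where
  "inv_on S A = blk S S (SOME B. \<forall>i\<in>S. \<forall>j\<in>S.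
      mat_mult S A B i j = idm i j \<and> mat_mult S B A i j = idm i j)"

definition nonneg_on :: "'i set \<Rightarrow> ('i \<Rightarrow> 'i \<Rightarrow> complex) \<Rightarrow> bool" where
  "nonneg_on S A \<longleftrightarrow> (\<exists>N. (\<forall>i\<in>S. \<forall>j\<in>S. A i j = idm i j - N i j) \<and> opnorm S S N \<le> 1)"

text \<open>Sites of the periodic lattice Z/L_0 x ... x Z/L_3 (directions numbered 0..3):
functions x :: nat => nat with x nu < L nu for nu < 4 and x nu = 0 otherwise.\<close>
definition sites :: "(nat \<Rightarrow> nat) \<Rightarrow> (nat \<Rightarrow> nat) set" where
  "sites L = {x. (\<forall>\<nu><4. x \<nu> < L \<nu>) \<and> (\<forall>\<nu>\<ge>4. x \<nu> = 0)}"

definition fwd :: "(nat \<Rightarrow> nat) \<Rightarrow> nat \<Rightarrow> (nat \<Rightarrow> nat) \<Rightarrow> (nat \<Rightarrow> nat)" where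
  "fwd L \<nu> x = x(\<nu> := (x \<nu> + 1) mod L \<nu>)"

definition bwd :: "(nat \<Rightarrow> nat) \<Rightarrow> nat \<Rightarrow> (nat \<Rightarrow> nat) \<Rightarrow> (nat \<Rightarrow> nat)" where
  "bwd L \<nu> x = x(\<nu> := (x \<nu> + L \<nu> - 1) mod L \<nu>)"

type_synonym idx = "(nat \<Rightarrow> nat) \<times> nat \<times> nat"  (* site, spin, colour *)

definition indices :: "(nat \<Rightarrow> nat) \<Rightarrow> nat \<Rightarrow> idx set" where
  "indices L Nc = sites L \<times> {..<4} \<times> {..<Nc}"

definition unitary_mat :: "nat \<Rightarrow> (nat \<Rightarrow> nat \<Rightarrow> complex) \<Rightarrow> bool" where
  "unitary_mat n V \<longleftrightarrow> (\<forall>i<n. \<forall>j<n.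
      (\<Sum>k<n. cnj (V k i) * V k j) = (if i = j then 1 else 0) \<and>
      (\<Sum>k<n. V i k * cnj (V j k)) = (if i = j then 1 else 0))"

definition dirac_gammas :: "(nat \<Rightarrow> nat \<Rightarrow> nat \<Rightarrow> complex) \<Rightarrow> bool" where
  "dirac_gammas \<gamma> \<longleftrightarrow>
     (\<forall>\<nu><4. \<forall>s<4. \<forall>t<4. \<gamma> \<nu> s t = cnj (\<gamma> \<nu> t s)) \<and>
     (\<forall>\<nu><4. \<forall>\<rho><4. \<forall>s<4. \<forall>t<4.
        (\<Sum>u<4. \<gamma> \<nu> s u * \<gamma> \<rho> u t + \<gamma> \<rho> s u * \<gamma> \<nu> u t)
          = (if \<nu> = \<rho> \<and> s = t then 2 else 0))"

definition gauge_field :: "(nat \<Rightarrow> nat) \<Rightarrow> nat \<Rightarrow> (nat \<Rightarrow> (nat \<Rightarrow> nat) \<Rightarrow> nat \<Rightarrow> nat \<Rightarrow> complex) \<Rightarrow> bool" where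
  "gauge_field L Nc U \<longleftrightarrow> (\<forall>x\<in>sites L. \<forall>\<nu><4. unitary_mat Nc (U \<nu> x))"

definition wilson_hop :: "(nat \<Rightarrow> nat) \<Rightarrow> real \<Rightarrow> (nat \<Rightarrow> nat \<Rightarrow> nat \<Rightarrow> complex)
    \<Rightarrow> (nat \<Rightarrow> (nat \<Rightarrow> nat) \<Rightarrow> nat \<Rightarrow> nat \<Rightarrow> complex) \<Rightarrow> idx \<Rightarrow> idx \<Rightarrow> complex" where
  "wilson_hop L \<kappa> \<gamma> U = (\<lambda>(x, s, c) (y, t, d). complex_of_real \<kappa> * (\<Sum>\<nu><4.
      (if y = fwd L \<nu> x then (idm s t - \<gamma> \<nu> s t) * U \<nu> x c d else 0)
    + (if y = bwd L \<nu> x then (idm s t + \<gamma> \<nu> s t) * cnj (U \<nu> (bwd L \<nu> x) d c) else 0)))"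

definition even_part :: "(nat \<Rightarrow> nat) \<Rightarrow> nat \<Rightarrow> nat \<Rightarrow> idx set" where
  "even_part L Nc \<mu> = {i \<in> indices L Nc. even (fst i \<mu>)}"

definition odd_part :: "(nat \<Rightarrow> nat) \<Rightarrow> nat \<Rightarrow> nat \<Rightarrow> idx set" where
  "odd_part L Nc \<mu> = {i \<in> indices L Nc. odd (fst i \<mu>)}"


definition geo_part :: "'i set \<Rightarrow> ('i \<Rightarrow> 'i \<Rightarrow> complex) \<Rightarrow> nat \<Rightarrow> 'i \<Rightarrow> 'i \<Rightarrow> complex" where
  "geo_part R M k = (\<lambda>i j. \<Sum>l<k. mat_pow R (blk R R M) l i j)"

definition geo_full :: "'i set \<Rightarrow> ('i \<Rightarrow> 'i \<Rightarrow> complex) \<Rightarrow> 'i \<Rightarrow> 'i \<Rightarrow> complex" where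
  "geo_full R M = (\<lambda>i j. \<Sum>l. mat_pow R (blk R R M) l i j)"

definition res_inv :: "'i set \<Rightarrow> ('i \<Rightarrow> 'i \<Rightarrow> complex) \<Rightarrow> 'i \<Rightarrow> 'i \<Rightarrow> complex" where
  "res_inv R M = inv_on R (\<lambda>i j. blk R R idm i j - blk R R M i j)"

definition eff_hop :: "'i set \<Rightarrow> 'i set \<Rightarrow> ('i \<Rightarrow> 'i \<Rightarrow> complex) \<Rightarrow> ('i \<Rightarrow> 'i \<Rightarrow> complex)
    \<Rightarrow> 'i \<Rightarrow> 'i \<Rightarrow> complex" where
  "eff_hop B R M P = (\<lambda>i j. blk B B M i j + mat_mult R (mat_mult R (blk B R M) P) (blk R B M) i j)"

definition schur :: "'i set \<Rightarrow> 'i set \<Rightarrow> ('i \<Rightarrow> 'i \<Rightarrow> complex) \<Rightarrow> 'i \<Rightarrow> 'i \<Rightarrow> complex" where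
  "schur B R M = (\<lambda>i j. blk B B idm i j - blk B B M i j
       - mat_mult R (mat_mult R (blk B R M) (res_inv R M)) (blk R B M) i j)"

definition schur_approx :: "'i set \<Rightarrow> 'i set \<Rightarrow> ('i \<Rightarrow> 'i \<Rightarrow> complex) \<Rightarrow> nat \<Rightarrow> 'i \<Rightarrow> 'i \<Rightarrow> complex" where
  "schur_approx B R M k = (\<lambda>i j. blk B B idm i j - eff_hop B R M (geo_part R M k) i j)"

end

theory Submission
  imports Defs "HOL-Analysis.L2_Norm"
begin

lemma vnorm_L2: "vnorm X v = L2_set (\<lambda>i. cmod (v i)) X"
  unfolding vnorm_def L2_set_def by simp

lemma vnorm_nonneg: "0 \<le> vnorm X v"
  unfolding vnorm_L2 by simp

lemma vnorm_cong: "(\<And>i. i \<in> X \<Longrightarrow> u i = w i) \<Longrightarrow> vnorm X u = vnorm X w"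
  unfolding vnorm_def by (simp cong: sum.cong)

lemma vnorm_add: "vnorm X (\<lambda>i. u i + w i) \<le> vnorm X u + vnorm X w"
proof -
  have "vnorm X (\<lambda>i. u i + w i) \<le> L2_set (\<lambda>i. cmod (u i) + cmod (w i)) X"
    unfolding vnorm_L2 by (rule L2_set_mono) (auto simp: norm_triangle_ineq)
  also have "\<dots> \<le> vnorm X u + vnorm X w"
    unfolding vnorm_L2 by (rule L2_set_triangle_ineq)
  finally show ?thesis .
qed

lemma vnorm_diff: "vnorm X (\<lambda>i. u i - w i) \<le> vnorm X u + vnorm X w"
proof -
  have "vnorm X (\<lambda>i. u i - w i) \<le> L2_set (\<lambda>i. cmod (u i) + cmod (w i)) X"
    unfolding vnorm_L2 by (rule L2_set_mono) (auto simp: norm_triangle_ineq4)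
  also have "\<dots> \<le> vnorm X u + vnorm X w"
    unfolding vnorm_L2 by (rule L2_set_triangle_ineq)
  finally show ?thesis .
qed

lemma vnorm_scale: "vnorm X (\<lambda>i. c * u i) = cmod c * vnorm X u"
  unfolding vnorm_L2 by (simp add: L2_set_right_distrib norm_mult)

lemma vnorm_zero: "vnorm X (\<lambda>i. 0) = 0"
  unfolding vnorm_def by simp

lemma vnorm_sum: "vnorm X (\<lambda>i. \<Sum>\<nu>\<in>F. f \<nu> i) \<le> (\<Sum>\<nu>\<in>F. vnorm X (f \<nu>))"
proof (induction F rule: infinite_finite_induct)
  case (infinite F) then show ?case by (simp add: vnorm_zero)
next
  case empty then show ?case by (simp add: vnorm_zero)
next
  case (insert x F)
  have "vnorm X (\<lambda>i. \<Sum>\<nu>\<in>insert x F. f \<nu> i) = vnorm X (\<lambda>i. f x i + (\<Sum>\<nu>\<in>F. f \<nu> i))"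
    using insert by simp
  also have "\<dots> \<le> vnorm X (f x) + vnorm X (\<lambda>i. \<Sum>\<nu>\<in>F. f \<nu> i)" by (rule vnorm_add)
  also have "\<dots> \<le> vnorm X (f x) + (\<Sum>\<nu>\<in>F. vnorm X (f \<nu>))" using insert by simp
  finally show ?case using insert by simp
qed

lemma vnorm_subset: "finite Y \<Longrightarrow> X \<subseteq> Y \<Longrightarrow> vnorm X u \<le> vnorm Y u"
  unfolding vnorm_def by (intro real_sqrt_le_mono sum_mono2) auto

lemma vnorm_ge: "finite X \<Longrightarrow> i \<in> X \<Longrightarrow> cmod (u i) \<le> vnorm X u"
  unfolding vnorm_L2 by (rule member_le_L2_set)

lemma sum_delta_l: "finite S \<Longrightarrow> (\<Sum>k\<in>S. (if i = k then 1 else 0) * f k) = (if i \<in> S then f i else (0::complex))"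
proof -
  assume "finite S"
  have "(\<Sum>k\<in>S. (if i = k then 1 else 0) * f k) = (\<Sum>k\<in>S. if i = k then f k else 0)"
    by (rule sum.cong) auto
  then show ?thesis using \<open>finite S\<close> by simp
qed

lemma sum_delta_r: "finite S \<Longrightarrow> (\<Sum>k\<in>S. f k * (if k = j then 1 else 0)) = (if j \<in> S then f j else (0::complex))"
proof -
  assume "finite S"
  have "(\<Sum>k\<in>S. f k * (if k = j then 1 else 0)) = (\<Sum>k\<in>S. if k = j then f k else 0)"
    by (rule sum.cong) auto
  then show ?thesis using \<open>finite S\<close> by simp
qed

definition opb :: "'i set \<Rightarrow> 'i set \<Rightarrow> ('i \<Rightarrow> 'i \<Rightarrow> complex) \<Rightarrow> real \<Rightarrow> bool" where
  "opb X Y A c \<longleftrightarrow> (\<forall>v. vnorm X (mat_apply Y A v) \<le> c * vnorm Y v)"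

lemma opb_opnorm: assumes "opb X Y A c" "0 \<le> c" shows "opnorm X Y A \<le> c"
  unfolding opnorm_def
proof (rule cSup_least)
  show "(\<lambda>v. vnorm X (mat_apply Y A v)) ` {v. vnorm Y v \<le> 1} \<noteq> {}"
  proof -
    have "(\<lambda>v. 0) \<in> {v. vnorm Y v \<le> 1}" using vnorm_zero[of Y] by simp
    then show ?thesis by blast
  qed
next
  fix x assume "x \<in> (\<lambda>v. vnorm X (mat_apply Y A v)) ` {v. vnorm Y v \<le> 1}"
  then obtain v where v: "vnorm Y v \<le> 1" "x = vnorm X (mat_apply Y A v)" by auto
  have "x \<le> c * vnorm Y v" using assms(1) v unfolding opb_def by auto
  also have "\<dots> \<le> c" using v assms(2) by (simp add: mult_left_le)
  finally show "x \<le> c" .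
qed

lemma opb_mono: "opb X Y A c \<Longrightarrow> c \<le> d \<Longrightarrow> opb X Y A d"
  unfolding opb_def by (meson mult_right_mono order_trans vnorm_nonneg)

lemma mat_apply_mult: "mat_apply Z (mat_mult Y A B) v = mat_apply Y A (mat_apply Z B v)"
  unfolding mat_apply_def mat_mult_def
  by (auto simp: sum_distrib_left sum_distrib_right mult.assoc intro!: ext sum.swap)

lemma opb_mult: assumes "opb X Y A a" "opb Y Z B b" "0 \<le> a"
  shows "opb X Z (mat_mult Y A B) (a * b)"
  unfolding opb_def mat_apply_mult
proof
  fix v
  have "vnorm X (mat_apply Y A (mat_apply Z B v)) \<le> a * vnorm Y (mat_apply Z B v)"
    using assms(1) unfolding opb_def by auto
  also have "\<dots> \<le> a * (b * vnorm Z v)"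
    using assms(2,3) unfolding opb_def by (simp add: mult_left_mono)
  finally show "vnorm X (mat_apply Y A (mat_apply Z B v)) \<le> a * b * vnorm Z v" by simp
qed

lemma mat_apply_add: "mat_apply Y (\<lambda>i j. A i j + B i j) v = (\<lambda>i. mat_apply Y A v i + mat_apply Y B v i)"
  unfolding mat_apply_def by (simp add: ring_distribs sum.distrib)

lemma mat_apply_diff: "mat_apply Y (\<lambda>i j. A i j - B i j) v = (\<lambda>i. mat_apply Y A v i - mat_apply Y B v i)"
  unfolding mat_apply_def by (simp add: ring_distribs sum_subtractf)

lemma opb_add: assumes "opb X Y A a" "opb X Y B b"
  shows "opb X Y (\<lambda>i j. A i j + B i j) (a + b)"
  unfolding opb_def mat_apply_add
proof
  fix v
  have "vnorm X (\<lambda>i. mat_apply Y A v i + mat_apply Y B v i)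
     \<le> vnorm X (mat_apply Y A v) + vnorm X (mat_apply Y B v)" by (rule vnorm_add)
  also have "\<dots> \<le> a * vnorm Y v + b * vnorm Y v"
    using assms unfolding opb_def by (meson add_mono)
  finally show "vnorm X (\<lambda>i. mat_apply Y A v i + mat_apply Y B v i) \<le> (a + b) * vnorm Y v"
    by (simp add: ring_distribs)
qed

lemma opb_zero: "opb X Y (\<lambda>i j. 0) 0"
  unfolding opb_def mat_apply_def by (simp add: vnorm_zero)

lemma opb_sum: "(\<And>l. l \<in> F \<Longrightarrow> opb X Y (f l) (c l)) \<Longrightarrow> opb X Y (\<lambda>i j. \<Sum>l\<in>F. f l i j) (\<Sum>l\<in>F. c l)"
proof (induction F rule: infinite_finite_induct)
  case (insert x F)
  then show ?case by (simp add: opb_add)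
qed (simp_all add: opb_zero)

lemma opb_cong: assumes "\<And>i j. i \<in> X \<Longrightarrow> j \<in> Y \<Longrightarrow> A i j = B i j" "opb X Y A c"
  shows "opb X Y B c"
proof -
  have "vnorm X (mat_apply Y B v) = vnorm X (mat_apply Y A v)" for v
    by (rule vnorm_cong) (simp add: mat_apply_def assms(1))
  then show ?thesis using assms(2) unfolding opb_def by simp
qed

lemma opb_entry: assumes "opb X Y A c" "finite X" "finite Y" "i \<in> X" "j \<in> Y"
  shows "cmod (A i j) \<le> c"
proof -
  define v where "v = (\<lambda>k. if k = j then (1::complex) else 0)"
  have "mat_apply Y A v i = A i j" unfolding mat_apply_def v_def using assms sum_delta_r[of Y "A i" j] by simp
  moreover have "vnorm Y v = 1"
  proof -
    have "(\<Sum>k\<in>Y. (cmod (v k))\<^sup>2) = (\<Sum>k\<in>Y. if k = j then 1 else 0)"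
      by (rule sum.cong) (auto simp: v_def)
    then show ?thesis unfolding vnorm_def using assms by simp
  qed
  ultimately show ?thesis using vnorm_ge[OF assms(2,4), of "mat_apply Y A v"] assms(1)
    unfolding opb_def by (metis mult.right_neutral order_trans)
qed

lemma opb_id: assumes fin: "finite S" shows "opb S S (blk S S idm) 1"
proof -
  have "vnorm S (mat_apply S (blk S S idm) v) = vnorm S v" for v
  proof (rule vnorm_cong)
    fix i assume i: "i \<in> S"
    have "mat_apply S (blk S S idm) v i = (\<Sum>k\<in>S. (if i = k then 1 else 0) * v k)"
      unfolding mat_apply_def blk_def idm_def using i by (intro sum.cong) auto
    then show "mat_apply S (blk S S idm) v i = v i" using i sum_delta_l[OF fin, of i v] by simp
  qed
  then show ?thesis unfolding opb_def by simp
qed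

lemma mat_mult_assoc: "mat_mult S (mat_mult S A B) C = mat_mult S A (mat_mult S B C)"
  unfolding mat_mult_def
  by (auto simp: sum_distrib_left sum_distrib_right mult.assoc intro!: ext sum.swap)

lemma mat_mult_id_left: "finite S \<Longrightarrow> i \<in> S \<Longrightarrow> mat_mult S (blk S S idm) A i j = A i j"
proof -
  assume a: "finite S" "i \<in> S"
  have "mat_mult S (blk S S idm) A i j = (\<Sum>k\<in>S. (if i = k then 1 else 0) * A k j)"
    unfolding mat_mult_def blk_def idm_def using a by (intro sum.cong) auto
  then show ?thesis using a sum_delta_l[of S i "\<lambda>k. A k j"] by simp
qed

lemma mat_mult_idm_left: "finite S \<Longrightarrow> i \<in> S \<Longrightarrow> mat_mult S idm A i j = A i j"
  unfolding mat_mult_def idm_def using sum_delta_l[of S i "\<lambda>k. A k j"] by simp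

lemma mat_mult_id_right: "finite S \<Longrightarrow> j \<in> S \<Longrightarrow> mat_mult S A (blk S S idm) i j = A i j"
proof -
  assume a: "finite S" "j \<in> S"
  have "mat_mult S A (blk S S idm) i j = (\<Sum>k\<in>S. A i k * (if k = j then 1 else 0))"
    unfolding mat_mult_def blk_def idm_def using a by (intro sum.cong) auto
  then show ?thesis using a sum_delta_r[of S "A i" j] by simp
qed

lemma mat_mult_idm_right: "finite S \<Longrightarrow> j \<in> S \<Longrightarrow> mat_mult S A idm i j = A i j"
  unfolding mat_mult_def idm_def using sum_delta_r[of S "A i" j] by simp

lemma mat_mult_diff_left: "mat_mult S (\<lambda>i j. A i j - B i j) C i j = mat_mult S A C i j - mat_mult S B C i j"
  unfolding mat_mult_def by (simp add: ring_distribs sum_subtractf)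

lemma mat_mult_diff_right: "mat_mult S A (\<lambda>i j. B i j - C i j) i j = mat_mult S A B i j - mat_mult S A C i j"
  unfolding mat_mult_def by (simp add: ring_distribs sum_subtractf)

lemma mat_mult_cong_right: "(\<And>k. k \<in> S \<Longrightarrow> B k j = C k j) \<Longrightarrow> mat_mult S A B i j = mat_mult S A C i j"
  unfolding mat_mult_def by simp

lemma mat_mult_cong_left: "(\<And>k. k \<in> S \<Longrightarrow> A i k = C i k) \<Longrightarrow> mat_mult S A B i j = mat_mult S C B i j"
  unfolding mat_mult_def by simp

lemma opb_pow: "finite S \<Longrightarrow> opb S S A a \<Longrightarrow> 0 \<le> a \<Longrightarrow> opb S S (mat_pow S A l) (a ^ l)"
  by (induction l) (auto simp: opb_id intro: opb_mult)

lemma pow_comm: assumes "finite S"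
  shows "\<forall>i\<in>S. \<forall>j\<in>S. mat_mult S (mat_pow S A l) A i j = mat_pow S A (Suc l) i j"
proof (induction l)
  case 0
  then show ?case using assms by (simp add: mat_mult_id_left mat_mult_id_right)
next
  case (Suc l)
  show ?case
  proof (intro ballI)
    fix i j assume ij: "i \<in> S" "j \<in> S"
    have "mat_mult S (mat_pow S A (Suc l)) A i j = mat_mult S A (mat_mult S (mat_pow S A l) A) i j"
      by (simp add: mat_mult_assoc)
    also have "\<dots> = mat_mult S A (mat_pow S A (Suc l)) i j"
      using Suc ij by (intro mat_mult_cong_right) auto
    finally show "mat_mult S (mat_pow S A (Suc l)) A i j = mat_pow S A (Suc (Suc l)) i j" by simp
  qed
qed

lemma inv_unique:
  assumes "finite S" "\<forall>i\<in>S. \<forall>j\<in>S. mat_mult S X B i j = idm i j"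
    "\<forall>i\<in>S. \<forall>j\<in>S. mat_mult S C X i j = idm i j"
  shows "\<forall>i\<in>S. \<forall>j\<in>S. C i j = B i j"
proof (intro ballI)
  fix i j assume ij: "i \<in> S" "j \<in> S"
  have "C i j = mat_mult S C (mat_mult S X B) i j"
  proof -
    have "mat_mult S C (mat_mult S X B) i j = mat_mult S C idm i j"
      using assms(2) ij by (intro mat_mult_cong_right) auto
    then show ?thesis using assms(1) ij by (simp add: mat_mult_idm_right)
  qed
  also have "\<dots> = mat_mult S (mat_mult S C X) B i j" by (simp add: mat_mult_assoc)
  also have "\<dots> = mat_mult S idm B i j"
    using assms(3) ij by (intro mat_mult_cong_left) auto
  also have "\<dots> = B i j" using assms(1) ij by (simp add: mat_mult_idm_left)
  finally show "C i j = B i j" .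
qed

lemma inv_on_eq:
  assumes "finite S" "\<forall>i\<in>S. \<forall>j\<in>S. mat_mult S X G i j = idm i j \<and> mat_mult S G X i j = idm i j"
  shows "invertible_on S X" "\<forall>i\<in>S. \<forall>j\<in>S. inv_on S X i j = G i j"
proof -
  show "invertible_on S X" unfolding invertible_on_def using assms(2) by blast
  define B where "B = (SOME B. \<forall>i\<in>S. \<forall>j\<in>S. mat_mult S X B i j = idm i j \<and> mat_mult S B X i j = idm i j)"
  have "\<forall>i\<in>S. \<forall>j\<in>S. mat_mult S X B i j = idm i j \<and> mat_mult S B X i j = idm i j"
    unfolding B_def by (rule someI[of _ G]) (use assms(2) in blast)
  then have "\<forall>i\<in>S. \<forall>j\<in>S. G i j = B i j"
    using inv_unique[OF assms(1), of X B G] assms(2) by blast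
  then show "\<forall>i\<in>S. \<forall>j\<in>S. inv_on S X i j = G i j"
    unfolding inv_on_def B_def[symmetric] blk_def by simp
qed

lemma id_minus_left: "finite S \<Longrightarrow> i \<in> S \<Longrightarrow>
  mat_mult S (\<lambda>i j. blk S S idm i j - A i j) P i j = P i j - mat_mult S A P i j"
  by (simp add: mat_mult_diff_left mat_mult_id_left)

lemma id_minus_right: "finite S \<Longrightarrow> j \<in> S \<Longrightarrow>
  mat_mult S P (\<lambda>i j. blk S S idm i j - A i j) i j = P i j - mat_mult S P A i j"
  by (simp add: mat_mult_diff_right mat_mult_id_right)

lemma geo_inverse:
  assumes fin: "finite S" and opA: "opb S S A a" and a: "0 \<le> a" "a < 1"
  defines "G \<equiv> \<lambda>i j. \<Sum>l. mat_pow S A l i j"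
  shows "\<forall>i\<in>S. \<forall>j\<in>S. (\<lambda>l. mat_pow S A l i j) sums G i j"
    and "\<forall>i\<in>S. \<forall>j\<in>S. mat_mult S (\<lambda>i j. blk S S idm i j - A i j) G i j = idm i j
                \<and> mat_mult S G (\<lambda>i j. blk S S idm i j - A i j) i j = idm i j"
    and "opb S S G (1 / (1 - a))"
proof -
  have ent: "cmod (mat_pow S A l i j) \<le> a ^ l" if "i \<in> S" "j \<in> S" for i j l
    using opb_entry[OF opb_pow[OF fin opA a(1)] fin fin that] .
  have summ: "summable (\<lambda>l. mat_pow S A l i j)" if "i \<in> S" "j \<in> S" for i j
    by (rule summable_comparison_test'[where N=0, OF summable_geometric[of a]])
       (use a ent[OF that] in auto)
  show sm: "\<forall>i\<in>S. \<forall>j\<in>S. (\<lambda>l. mat_pow S A l i j) sums G i j"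
    unfolding G_def using summ summable_sums by blast
  have lim0: "(\<lambda>l. mat_pow S A l i j) \<longlonglongrightarrow> 0" if "i \<in> S" "j \<in> S" for i j
    using summable_LIMSEQ_zero[OF summ[OF that]] .
  have left: "mat_mult S (\<lambda>i j. blk S S idm i j - A i j) G i j = idm i j" if ij: "i \<in> S" "j \<in> S" for i j
  proof -
    let ?E = "\<lambda>i j. blk S S idm i j - A i j"
    have "(\<lambda>l. \<Sum>k\<in>S. ?E i k * mat_pow S A l k j) sums (\<Sum>k\<in>S. ?E i k * G k j)"
      by (rule sums_sum) (use sm ij in \<open>auto intro: sums_mult\<close>)
    moreover have "(\<lambda>l. \<Sum>k\<in>S. ?E i k * mat_pow S A l k j)
        = (\<lambda>l. mat_pow S A l i j - mat_pow S A (Suc l) i j)"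
      using id_minus_left[OF fin ij(1), of A] by (auto simp: mat_mult_def)
    moreover have "(\<lambda>l. mat_pow S A l i j - mat_pow S A (Suc l) i j) sums (mat_pow S A 0 i j - 0)"
      by (rule telescope_sums'[OF lim0[OF ij]])
    ultimately have "(\<Sum>k\<in>S. ?E i k * G k j) = mat_pow S A 0 i j"
      using sums_unique2 by fastforce
    then show ?thesis using ij by (simp add: mat_mult_def blk_def)
  qed
  have right: "mat_mult S G (\<lambda>i j. blk S S idm i j - A i j) i j = idm i j" if ij: "i \<in> S" "j \<in> S" for i j
  proof -
    let ?E = "\<lambda>i j. blk S S idm i j - A i j"
    have "(\<lambda>l. \<Sum>k\<in>S. mat_pow S A l i k * ?E k j) sums (\<Sum>k\<in>S. G i k * ?E k j)"
      by (rule sums_sum) (use sm ij in \<open>auto intro: sums_mult2\<close>)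
    moreover have "(\<lambda>l. \<Sum>k\<in>S. mat_pow S A l i k * ?E k j)
        = (\<lambda>l. mat_pow S A l i j - mat_pow S A (Suc l) i j)"
    proof
      fix l
      have "(\<Sum>k\<in>S. mat_pow S A l i k * ?E k j) = mat_mult S (mat_pow S A l) ?E i j"
        by (simp add: mat_mult_def)
      also have "\<dots> = mat_pow S A l i j - mat_mult S (mat_pow S A l) A i j"
        by (rule id_minus_right[OF fin ij(2)])
      also have "\<dots> = mat_pow S A l i j - mat_pow S A (Suc l) i j"
        using pow_comm[OF fin, of A l] ij by simp
      finally show "(\<Sum>k\<in>S. mat_pow S A l i k * ?E k j) = mat_pow S A l i j - mat_pow S A (Suc l) i j" .
    qed
    moreover have "(\<lambda>l. mat_pow S A l i j - mat_pow S A (Suc l) i j) sums (mat_pow S A 0 i j - 0)"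
      by (rule telescope_sums'[OF lim0[OF ij]])
    ultimately have "(\<Sum>k\<in>S. G i k * ?E k j) = mat_pow S A 0 i j"
      using sums_unique2 by fastforce
    then show ?thesis using ij by (simp add: mat_mult_def blk_def)
  qed
  show "\<forall>i\<in>S. \<forall>j\<in>S. mat_mult S (\<lambda>i j. blk S S idm i j - A i j) G i j = idm i j
                \<and> mat_mult S G (\<lambda>i j. blk S S idm i j - A i j) i j = idm i j"
    using left right by blast
  show "opb S S G (1 / (1 - a))"
    unfolding opb_def
  proof
    fix w
    let ?E = "\<lambda>i j. blk S S idm i j - A i j"
    define u where "u = mat_apply S G w"
    have wu: "w i = u i - mat_apply S A u i" if i: "i \<in> S" for i
    proof -
      have "mat_apply S ?E u i = mat_apply S (mat_mult S ?E G) w i"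
        unfolding u_def mat_apply_mult ..
      also have "\<dots> = (\<Sum>j\<in>S. idm i j * w j)"
        unfolding mat_apply_def using left i by simp
      also have "\<dots> = w i" using sum_delta_l[OF fin, of i w] i by (simp add: idm_def)
      finally have "w i = mat_apply S ?E u i" by simp
      also have "\<dots> = mat_apply S (blk S S idm) u i - mat_apply S A u i"
        by (simp add: mat_apply_diff)
      also have "mat_apply S (blk S S idm) u i = u i"
        using mat_mult_id_left[OF fin i, of "\<lambda>k j. u k"] by (simp add: mat_apply_def mat_mult_def)
      finally show ?thesis .
    qed
    have "vnorm S u = vnorm S (\<lambda>i. w i + mat_apply S A u i)"
      by (rule vnorm_cong) (simp add: wu)
    also have "\<dots> \<le> vnorm S w + vnorm S (mat_apply S A u)" by (rule vnorm_add)
    also have "\<dots> \<le> vnorm S w + a * vnorm S u" using opA unfolding opb_def by auto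
    finally have "(1 - a) * vnorm S u \<le> vnorm S w" by (simp add: algebra_simps)
    then show "vnorm S (mat_apply S G w) \<le> 1 / (1 - a) * vnorm S w"
      using a unfolding u_def by (simp add: field_simps)
  qed
qed

lemma eff_hop_cong: "(\<And>i j. i \<in> R \<Longrightarrow> j \<in> R \<Longrightarrow> P i j = P' i j) \<Longrightarrow> eff_hop B R M P = eff_hop B R M P'"
  unfolding eff_hop_def mat_mult_def by (intro ext) (simp cong: sum.cong)

lemma eff_diff: "eff_hop B R M P i j - eff_hop B R M P' i j
   = mat_mult R (mat_mult R (blk B R M) (\<lambda>i j. P i j - P' i j)) (blk R B M) i j"
proof -
  have "mat_mult R (blk B R M) (\<lambda>i j. P i j - P' i j)
     = (\<lambda>i j. mat_mult R (blk B R M) P i j - mat_mult R (blk B R M) P' i j)"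
    by (intro ext) (rule mat_mult_diff_right)
  then show ?thesis unfolding eff_hop_def by (simp add: mat_mult_diff_left)
qed

lemma opb_eff: assumes "opb B B (blk B B M) (3/4)" "opb B R (blk B R M) (1/4)" "opb R B (blk R B M) (1/4)"
  "opb R R P p" "0 \<le> p"
  shows "opb B B (eff_hop B R M P) (3/4 + 1/4 * p * (1/4))"
  unfolding eff_hop_def
  by (intro opb_add assms(1) opb_mult assms) (use assms(5) in auto)

lemma mat_mult_sum_right: "mat_mult S A (\<lambda>i j. \<Sum>l\<in>F. P l i j) i j = (\<Sum>l\<in>F. mat_mult S A (P l) i j)"
  unfolding mat_mult_def by (simp add: sum_distrib_left sum.swap[of _ S F])

lemma schur_main:
  fixes M :: "'i \<Rightarrow> 'i \<Rightarrow> complex"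
  assumes finB: "finite B" and finR: "finite R"
   and rr: "opb R R (blk R R M) (3/4)" and bb: "opb B B (blk B B M) (3/4)"
   and br: "opb B R (blk B R M) (1/4)" and rb: "opb R B (blk R B M) (1/4)"
  shows "opnorm R R (blk R R M) < 1
    \<and> invertible_on R (\<lambda>i j. blk R R idm i j - blk R R M i j)
    \<and> (\<forall>i\<in>R. \<forall>j\<in>R. (\<lambda>l. mat_pow R (blk R R M) l i j) sums res_inv R M i j)
    \<and> nonneg_on B (schur B R M)
    \<and> opnorm B B (eff_hop B R M (geo_full R M)) \<le> 1
    \<and> (\<forall>k\<ge>1. nonneg_on B (schur_approx B R M k)
         \<and> opnorm B B (eff_hop B R M (geo_part R M k)) \<le> 1 - 1/4 * (3/4) ^ k
         \<and> invertible_on B (schur_approx B R M k)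
         \<and> opnorm B B (\<lambda>i j. blk B B idm i j
              - mat_mult B (inv_on B (schur_approx B R M k)) (schur B R M) i j) \<le> 1)"
proof -
  let ?Ar = "blk R R M"
  let ?E = "\<lambda>i j. blk R R idm i j - ?Ar i j"
  define G where "G = geo_full R M"
  have G_def': "G = (\<lambda>i j. \<Sum>l. mat_pow R ?Ar l i j)" unfolding G_def geo_full_def ..
  note geo = geo_inverse[OF finR rr, simplified]
  have sumsG: "\<forall>i\<in>R. \<forall>j\<in>R. (\<lambda>l. mat_pow R ?Ar l i j) sums G i j" using geo(1) unfolding G_def' by simp
  have invG: "\<forall>i\<in>R. \<forall>j\<in>R. mat_mult R ?E G i j = idm i j \<and> mat_mult R G ?E i j = idm i j"
    using geo(2) unfolding G_def' by simp
  have opG: "opb R R G 4" using geo(3) unfolding G_def' by simp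
  have c1: "opnorm R R ?Ar < 1" using opb_opnorm[OF rr] by simp
  have c2: "invertible_on R ?E" and resG: "\<forall>i\<in>R. \<forall>j\<in>R. res_inv R M i j = G i j"
    using inv_on_eq[OF finR invG] unfolding res_inv_def by auto
  have c3: "\<forall>i\<in>R. \<forall>j\<in>R. (\<lambda>l. mat_pow R ?Ar l i j) sums res_inv R M i j"
    using sumsG resG by simp
  define Ainf where "Ainf = eff_hop B R M G"
  have schur_eq: "schur B R M = (\<lambda>i j. blk B B idm i j - Ainf i j)"
  proof -
    have "eff_hop B R M (res_inv R M) = Ainf" unfolding Ainf_def
      by (rule eff_hop_cong) (use resG in auto)
    then have "\<And>i j. blk B B M i j + mat_mult R (mat_mult R (blk B R M) (res_inv R M)) (blk R B M) i j = Ainf i j"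
      unfolding eff_hop_def by metis
    then show ?thesis unfolding schur_def by (auto simp: fun_eq_iff algebra_simps)
  qed
  have opAinf: "opb B B Ainf 1"
    using opb_eff[OF bb br rb opG] unfolding Ainf_def by simp
  have c4: "nonneg_on B (schur B R M)"
    unfolding nonneg_on_def schur_eq
    by (rule exI[of _ Ainf]) (use opb_opnorm[OF opAinf] in \<open>auto simp: blk_def\<close>)
  have c5: "opnorm B B (eff_hop B R M (geo_full R M)) \<le> 1"
    using opb_opnorm[OF opAinf] unfolding Ainf_def G_def by simp
  have c6: "nonneg_on B (schur_approx B R M k)
         \<and> opnorm B B (eff_hop B R M (geo_part R M k)) \<le> 1 - 1/4 * (3/4) ^ k
         \<and> invertible_on B (schur_approx B R M k)
         \<and> opnorm B B (\<lambda>i j. blk B B idm i j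
              - mat_mult B (inv_on B (schur_approx B R M k)) (schur B R M) i j) \<le> 1"
    if k: "k \<ge> 1" for k
  proof -
    define q :: real where "q = 1/4 * (3/4) ^ k"
    have q: "0 < q" "q \<le> 1/4" unfolding q_def using k by (auto simp: power_le_one)
    define Gk where "Gk = geo_part R M k"
    have Gk_def': "Gk = (\<lambda>i j. \<Sum>l<k. mat_pow R ?Ar l i j)" unfolding Gk_def geo_part_def ..
    have sgp: "(\<Sum>l<k. (3/4::real) ^ l) = 4 * (1 - (3/4) ^ k)"
      by (simp add: sum_gp_strict)
    have opGk: "opb R R Gk (\<Sum>l<k. (3/4::real) ^ l)"
      unfolding Gk_def' by (rule opb_sum) (rule opb_pow[OF finR rr], simp)
    define Ak where "Ak = eff_hop B R M Gk"
    have opAk: "opb B B Ak (1 - q)"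
      using opb_eff[OF bb br rb opGk] unfolding Ak_def sgp q_def
      by (simp add: algebra_simps power_le_one)
    have d1: "nonneg_on B (schur_approx B R M k)"
      unfolding nonneg_on_def schur_approx_def
      by (rule exI[of _ Ak]) (use opb_opnorm[OF opAk] q in \<open>auto simp: blk_def Ak_def Gk_def\<close>)
    have d2: "opnorm B B (eff_hop B R M (geo_part R M k)) \<le> 1 - 1/4 * (3/4) ^ k"
      using opb_opnorm[OF opAk] q unfolding Ak_def Gk_def q_def by simp
    have Sk_eq: "schur_approx B R M k = (\<lambda>i j. blk B B idm i j - Ak i j)"
      unfolding schur_approx_def Ak_def Gk_def ..
    define H where "H = (\<lambda>i j. \<Sum>l. mat_pow B Ak l i j)"
    note geoB = geo_inverse[OF finB opAk]
    have invH: "\<forall>i\<in>B. \<forall>j\<in>B. mat_mult B (schur_approx B R M k) H i j = idm i j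
        \<and> mat_mult B H (schur_approx B R M k) i j = idm i j"
      unfolding Sk_eq H_def using geoB(2) q by simp
    have opH: "opb B B H (1 / q)" unfolding H_def using geoB(3) q by simp
    have d3: "invertible_on B (schur_approx B R M k)"
      and invH': "\<forall>i\<in>B. \<forall>j\<in>B. inv_on B (schur_approx B R M k) i j = H i j"
      using inv_on_eq[OF finB invH] by auto
    have tail: "G i j - Gk i j = mat_mult R G (mat_pow R ?Ar k) i j" if ij: "i \<in> R" "j \<in> R" for i j
    proof -
      have a: "mat_mult R ?E Gk m j = mat_pow R ?Ar 0 m j - mat_pow R ?Ar k m j" if m: "m \<in> R" for m
      proof -
        have "mat_mult R ?E Gk m j = Gk m j - mat_mult R ?Ar Gk m j"
          by (rule id_minus_left[OF finR m])
        also have "mat_mult R ?Ar Gk m j = (\<Sum>l<k. mat_pow R ?Ar (Suc l) m j)"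
          unfolding Gk_def' mat_mult_sum_right by simp
        also have "Gk m j - (\<Sum>l<k. mat_pow R ?Ar (Suc l) m j)
            = (\<Sum>l<k. mat_pow R ?Ar l m j - mat_pow R ?Ar (Suc l) m j)"
          unfolding Gk_def' by (simp add: sum_subtractf)
        also have "\<dots> = mat_pow R ?Ar 0 m j - mat_pow R ?Ar k m j"
          by (rule sum_lessThan_telescope')
        finally show ?thesis .
      qed
      have "Gk i j = mat_mult R (mat_mult R G ?E) Gk i j"
      proof -
        have "mat_mult R (mat_mult R G ?E) Gk i j = mat_mult R idm Gk i j"
          using invG ij by (intro mat_mult_cong_left) auto
        then show ?thesis using finR ij by (simp add: mat_mult_idm_left)
      qed
      also have "\<dots> = mat_mult R G (mat_mult R ?E Gk) i j" by (simp add: mat_mult_assoc)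
      also have "\<dots> = mat_mult R G (\<lambda>m j. mat_pow R ?Ar 0 m j - mat_pow R ?Ar k m j) i j"
        using a by (intro mat_mult_cong_right) auto
      also have "\<dots> = G i j - mat_mult R G (mat_pow R ?Ar k) i j"
        using finR ij by (simp add: mat_mult_diff_right mat_mult_id_right)
      finally show ?thesis by simp
    qed
    have opTail: "opb R R (\<lambda>i j. G i j - Gk i j) (4 * (3/4) ^ k)"
      by (rule opb_cong[OF _ opb_mult[OF opG opb_pow[OF finR rr]]]) (use tail in auto)
    define D where "D = (\<lambda>i j. Ainf i j - Ak i j)"
    have D_eq: "D = mat_mult R (mat_mult R (blk B R M) (\<lambda>i j. G i j - Gk i j)) (blk R B M)"
      unfolding D_def Ainf_def Ak_def by (intro ext) (rule eff_diff)
    have opD: "opb B B D q"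
      unfolding D_eq q_def
      by (rule opb_mono[OF opb_mult[OF opb_mult[OF br opTail] rb]]) auto
    have opHD: "opb B B (mat_mult B H D) 1"
      using opb_mult[OF opH opD] q by simp
    have "blk B B idm i j - mat_mult B (inv_on B (schur_approx B R M k)) (schur B R M) i j
        = mat_mult B H D i j" if ij: "i \<in> B" "j \<in> B" for i j
    proof -
      have "schur B R M = (\<lambda>i j. schur_approx B R M k i j - D i j)"
        unfolding schur_eq Sk_eq D_def by auto
      then have "mat_mult B (inv_on B (schur_approx B R M k)) (schur B R M) i j
          = mat_mult B H (\<lambda>i j. schur_approx B R M k i j - D i j) i j"
        using invH' ij by (auto intro: mat_mult_cong_left)
      also have "\<dots> = idm i j - mat_mult B H D i j"
        using invH ij by (simp add: mat_mult_diff_right)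
      finally show ?thesis using ij by (simp add: blk_def)
    qed
    then have d4: "opnorm B B (\<lambda>i j. blk B B idm i j
              - mat_mult B (inv_on B (schur_approx B R M k)) (schur B R M) i j) \<le> 1"
      by (intro opb_opnorm opb_cong[OF _ opHD]) auto
    show ?thesis using d1 d2 d3 d4 by blast
  qed
  show ?thesis using c1 c2 c3 c4 c5 c6 by blast
qed

lemma finite_sites: "finite (sites L)"
proof -
  let ?m = "L 0 + L 1 + L 2 + L 3"
  have "sites L \<subseteq> {f. \<forall>x. (x \<in> {..<4::nat} \<longrightarrow> f x \<in> {..<?m}) \<and> (x \<notin> {..<4} \<longrightarrow> f x = 0)}"
  proof
    fix f assume f: "f \<in> sites L"
    show "f \<in> {f. \<forall>x. (x \<in> {..<4::nat} \<longrightarrow> f x \<in> {..<?m}) \<and> (x \<notin> {..<4} \<longrightarrow> f x = 0)}"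
    proof -
      have "f 0 < L 0" "f 1 < L 1" "f 2 < L 2" "f 3 < L 3" using f unfolding sites_def by auto
      then have "f x < ?m" if "x < 4" for x
      proof -
        have "x = 0 \<or> x = 1 \<or> x = 2 \<or> x = 3" using that by auto
        then show ?thesis using \<open>f 0 < L 0\<close> \<open>f 1 < L 1\<close> \<open>f 2 < L 2\<close> \<open>f 3 < L 3\<close> by auto
      qed
      moreover have "f x = 0" if "\<not> x < 4" for x using f that unfolding sites_def by auto
      ultimately show ?thesis by auto
    qed
  qed
  moreover have "finite {f. \<forall>x. (x \<in> {..<4::nat} \<longrightarrow> f x \<in> {..<?m}) \<and> (x \<notin> {..<4} \<longrightarrow> f x = (0::nat))}"
    by (rule finite_set_of_finite_funs) auto
  ultimately show ?thesis by (rule finite_subset)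
qed

lemma finite_indices: "finite (indices L Nc)"
  unfolding indices_def by (simp add: finite_sites)

lemma mod_fb: "(a::nat) < n \<Longrightarrow> ((a + 1) mod n + n - 1) mod n = a"
proof -
  assume a: "a < n"
  show ?thesis
  proof (cases "a + 1 < n")
    case True
    then have "(a + 1) mod n + n - 1 = a + n" by simp
    then show ?thesis using a by simp
  next
    case False
    then have "a + 1 = n" using a by simp
    then show ?thesis by simp
  qed
qed

lemma mod_bf: "(a::nat) < n \<Longrightarrow> ((a + n - 1) mod n + 1) mod n = a"
proof -
  assume a: "a < n"
  show ?thesis
  proof (cases a)
    case 0
    then obtain m where m: "n = Suc m" using a by (cases n) auto
    have "(a + n - 1) mod n = m" using 0 m by simp
    then show ?thesis using 0 m by simp
  next
    case (Suc b)
    then have "a + n - 1 = b + n" by simp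
    then have "(a + n - 1) mod n = b" using a Suc by simp
    then show ?thesis using a Suc by simp
  qed
qed

lemma fwd_in: "\<nu> < 4 \<Longrightarrow> 0 < L \<nu> \<Longrightarrow> x \<in> sites L \<Longrightarrow> fwd L \<nu> x \<in> sites L"
  unfolding sites_def fwd_def by auto

lemma bwd_in: "\<nu> < 4 \<Longrightarrow> 0 < L \<nu> \<Longrightarrow> x \<in> sites L \<Longrightarrow> bwd L \<nu> x \<in> sites L"
  unfolding sites_def bwd_def by auto

lemma bwd_fwd: "\<nu> < 4 \<Longrightarrow> x \<in> sites L \<Longrightarrow> bwd L \<nu> (fwd L \<nu> x) = x"
proof -
  assume a: "\<nu> < 4" "x \<in> sites L"
  then have "x \<nu> < L \<nu>" unfolding sites_def by auto
  then have e: "((x \<nu> + 1) mod L \<nu> + L \<nu> - 1) mod L \<nu> = x \<nu>" by (rule mod_fb)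
  show ?thesis unfolding bwd_def fwd_def by (simp only: fun_upd_same fun_upd_upd e fun_upd_triv)
qed

lemma fwd_bwd: "\<nu> < 4 \<Longrightarrow> x \<in> sites L \<Longrightarrow> fwd L \<nu> (bwd L \<nu> x) = x"
proof -
  assume a: "\<nu> < 4" "x \<in> sites L"
  then have "x \<nu> < L \<nu>" unfolding sites_def by auto
  then have e: "((x \<nu> + L \<nu> - 1) mod L \<nu> + 1) mod L \<nu> = x \<nu>" by (rule mod_bf)
  show ?thesis unfolding bwd_def fwd_def by (simp only: fun_upd_same fun_upd_upd e fun_upd_triv)
qed

lemma sum_fwd: "\<nu> < 4 \<Longrightarrow> 0 < L \<nu> \<Longrightarrow> (\<Sum>x\<in>sites L. f (fwd L \<nu> x)) = (\<Sum>x\<in>sites L. f x)"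
  by (rule sum.reindex_bij_witness[of _ "bwd L \<nu>" "fwd L \<nu>"])
     (auto simp: fwd_in bwd_in bwd_fwd fwd_bwd)

lemma sum_bwd: "\<nu> < 4 \<Longrightarrow> 0 < L \<nu> \<Longrightarrow> (\<Sum>x\<in>sites L. f (bwd L \<nu> x)) = (\<Sum>x\<in>sites L. f x)"
  by (rule sum.reindex_bij_witness[of _ "fwd L \<nu>" "bwd L \<nu>"])
     (auto simp: fwd_in bwd_in bwd_fwd fwd_bwd)

lemma sum_I: "(\<Sum>i\<in>A \<times> B \<times> C. f i) = (\<Sum>x\<in>A. \<Sum>s\<in>B. \<Sum>c\<in>C. f (x, s, c))"
  by (simp add: sum.cartesian_product)

lemma fwd_parity: "\<mu> < 4 \<Longrightarrow> even (L \<mu>) \<Longrightarrow> x \<in> sites L \<Longrightarrow> even (fwd L \<mu> x \<mu>) \<longleftrightarrow> odd (x \<mu>)"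
proof -
  assume a: "\<mu> < 4" "even (L \<mu>)" "x \<in> sites L"
  then have lt: "x \<mu> < L \<mu>" unfolding sites_def by auto
  show ?thesis
  proof (cases "x \<mu> + 1 < L \<mu>")
    case True then show ?thesis unfolding fwd_def by simp
  next
    case False then have "x \<mu> + 1 = L \<mu>" using lt by simp
    then have "odd (x \<mu>)" using a(2) by (metis even_plus_one_iff)
    have "fwd L \<mu> x \<mu> = 0" unfolding fwd_def using \<open>x \<mu> + 1 = L \<mu>\<close> by (simp only: fun_upd_same mod_self)
    then show ?thesis using \<open>odd (x \<mu>)\<close> by simp
  qed
qed

lemma bwd_parity: "\<mu> < 4 \<Longrightarrow> even (L \<mu>) \<Longrightarrow> x \<in> sites L \<Longrightarrow> even (bwd L \<mu> x \<mu>) \<longleftrightarrow> odd (x \<mu>)"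
proof -
  assume a: "\<mu> < 4" "even (L \<mu>)" "x \<in> sites L"
  then have lt: "x \<mu> < L \<mu>" unfolding sites_def by auto
  show ?thesis
  proof (cases "x \<mu> = 0")
    case True
    obtain m where m: "L \<mu> = Suc m" using lt by (cases "L \<mu>") auto
    then have "bwd L \<mu> x \<mu> = m" using True unfolding bwd_def by simp
    moreover have "odd m" using m a(2) by simp
    ultimately show ?thesis using True by simp
  next
    case False
    obtain y where y: "x \<mu> = Suc y" using False by (cases "x \<mu>") auto
    then have "x \<mu> + L \<mu> - 1 = y + L \<mu>" by simp
    then have "bwd L \<mu> x \<mu> = (y + L \<mu>) mod L \<mu>" unfolding bwd_def by simp
    also have "\<dots> = y" using lt y by simp
    finally show ?thesis using y by simp
  qed
qed

lemma fwd_other: "\<nu> \<noteq> \<mu> \<Longrightarrow> fwd L \<nu> x \<mu> = x \<mu>"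
  unfolding fwd_def by simp

lemma bwd_other: "\<nu> \<noteq> \<mu> \<Longrightarrow> bwd L \<nu> x \<mu> = x \<mu>"
  unfolding bwd_def by simp

definition hopm :: "(nat \<Rightarrow> nat) \<Rightarrow> real \<Rightarrow> (nat \<Rightarrow> nat \<Rightarrow> nat \<Rightarrow> complex)
    \<Rightarrow> (nat \<Rightarrow> (nat \<Rightarrow> nat) \<Rightarrow> nat \<Rightarrow> nat \<Rightarrow> complex) \<Rightarrow> nat \<Rightarrow> idx \<Rightarrow> idx \<Rightarrow> complex" where
  "hopm L \<kappa> \<gamma> U \<nu> = (\<lambda>(x, s, c) (y, t, d). complex_of_real \<kappa> * (
      (if y = fwd L \<nu> x then (idm s t - \<gamma> \<nu> s t) * U \<nu> x c d else 0)
    + (if y = bwd L \<nu> x then (idm s t + \<gamma> \<nu> s t) * cnj (U \<nu> (bwd L \<nu> x) d c) else 0)))"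

lemma wilson_sum: "wilson_hop L \<kappa> \<gamma> U i j = (\<Sum>\<nu><4. hopm L \<kappa> \<gamma> U \<nu> i j)"
  by (cases i rule: prod_cases3; cases j rule: prod_cases3)
     (simp add: wilson_hop_def hopm_def sum_distrib_left)

definition Gm :: "(nat \<Rightarrow> nat \<Rightarrow> nat \<Rightarrow> complex) \<Rightarrow> nat \<Rightarrow> (idx \<Rightarrow> complex) \<Rightarrow> idx \<Rightarrow> complex" where
  "Gm \<gamma> \<nu> w = (\<lambda>(x, s, c). \<Sum>t<4. \<gamma> \<nu> s t * w (x, t, c))"

definition Vf :: "(nat \<Rightarrow> nat) \<Rightarrow> (nat \<Rightarrow> (nat \<Rightarrow> nat) \<Rightarrow> nat \<Rightarrow> nat \<Rightarrow> complex) \<Rightarrow> nat \<Rightarrow> nat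
    \<Rightarrow> (idx \<Rightarrow> complex) \<Rightarrow> idx \<Rightarrow> complex" where
  "Vf L U \<nu> Nc w = (\<lambda>(x, s, c). \<Sum>d<Nc. U \<nu> x c d * w (fwd L \<nu> x, s, d))"

definition Vb :: "(nat \<Rightarrow> nat) \<Rightarrow> (nat \<Rightarrow> (nat \<Rightarrow> nat) \<Rightarrow> nat \<Rightarrow> nat \<Rightarrow> complex) \<Rightarrow> nat \<Rightarrow> nat
    \<Rightarrow> (idx \<Rightarrow> complex) \<Rightarrow> idx \<Rightarrow> complex" where
  "Vb L U \<nu> Nc w = (\<lambda>(x, s, c). \<Sum>d<Nc. cnj (U \<nu> (bwd L \<nu> x) d c) * w (bwd L \<nu> x, s, d))"

lemma idm_sum: "s < (n::nat) \<Longrightarrow> (\<Sum>t<n. idm s t * g t) = g s"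
  unfolding idm_def using sum_delta_l[of "{..<n}" s g] by simp

lemma hop_decomp:
  assumes x: "x \<in> sites L" and s: "s < 4" and \<nu>: "\<nu> < 4" and L: "0 < L \<nu>"
  shows "mat_apply (indices L Nc) (hopm L \<kappa> \<gamma> U \<nu>) w (x, s, c)
    = complex_of_real \<kappa> * (Vf L U \<nu> Nc w (x, s, c) - Gm \<gamma> \<nu> (Vf L U \<nu> Nc w) (x, s, c)
        + Vb L U \<nu> Nc w (x, s, c) + Gm \<gamma> \<nu> (Vb L U \<nu> Nc w) (x, s, c))"
proof -
  let ?f = "fwd L \<nu> x" and ?b = "bwd L \<nu> x" and ?k = "complex_of_real \<kappa>"
  define P where "P = ?k * (\<Sum>t<4. \<Sum>d<Nc. (idm s t - \<gamma> \<nu> s t) * U \<nu> x c d * w (?f, t, d))"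
  define Q where "Q = ?k * (\<Sum>t<4. \<Sum>d<Nc. (idm s t + \<gamma> \<nu> s t) * cnj (U \<nu> ?b d c) * w (?b, t, d))"
  have inner: "(\<Sum>t<4. \<Sum>d<Nc. hopm L \<kappa> \<gamma> U \<nu> (x, s, c) (y, t, d) * w (y, t, d))
      = (if y = ?f then P else 0) + (if y = ?b then Q else 0)" for y
    unfolding hopm_def P_def Q_def
    by (simp add: ring_distribs sum.distrib sum_distrib_left mult.assoc)
  have "mat_apply (indices L Nc) (hopm L \<kappa> \<gamma> U \<nu>) w (x, s, c)
      = (\<Sum>y\<in>sites L. (if y = ?f then P else 0) + (if y = ?b then Q else 0))"
    unfolding mat_apply_def indices_def sum_I inner ..
  also have "\<dots> = P + Q"
    using fwd_in[OF \<nu> L x] bwd_in[OF \<nu> L x] finite_sites[of L] by (simp add: sum.distrib)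
  also have "P = ?k * (Vf L U \<nu> Nc w (x, s, c) - Gm \<gamma> \<nu> (Vf L U \<nu> Nc w) (x, s, c))"
  proof -
    have "(\<Sum>t<4. \<Sum>d<Nc. (idm s t - \<gamma> \<nu> s t) * U \<nu> x c d * w (?f, t, d))
        = (\<Sum>t<4. idm s t * Vf L U \<nu> Nc w (x, t, c)) - (\<Sum>t<4. \<gamma> \<nu> s t * Vf L U \<nu> Nc w (x, t, c))"
      unfolding Vf_def by (simp add: sum_distrib_left ring_distribs sum_subtractf mult.assoc)
    then show ?thesis unfolding P_def using idm_sum[OF s] by (simp add: Gm_def)
  qed
  also have "Q = ?k * (Vb L U \<nu> Nc w (x, s, c) + Gm \<gamma> \<nu> (Vb L U \<nu> Nc w) (x, s, c))"
  proof -
    have "(\<Sum>t<4. \<Sum>d<Nc. (idm s t + \<gamma> \<nu> s t) * cnj (U \<nu> ?b d c) * w (?b, t, d))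
        = (\<Sum>t<4. idm s t * Vb L U \<nu> Nc w (x, t, c)) + (\<Sum>t<4. \<gamma> \<nu> s t * Vb L U \<nu> Nc w (x, t, c))"
      unfolding Vb_def by (simp add: sum_distrib_left ring_distribs sum.distrib mult.assoc)
    then show ?thesis unfolding Q_def using idm_sum[OF s] by (simp add: Gm_def)
  qed
  finally show ?thesis by (simp add: ring_distribs)
qed

definition ip :: "'i set \<Rightarrow> ('i \<Rightarrow> complex) \<Rightarrow> ('i \<Rightarrow> complex) \<Rightarrow> complex" where
  "ip S u v = (\<Sum>i\<in>S. cnj (u i) * v i)"

lemma ip_add_l: "ip S (\<lambda>i. u i + w i) v = ip S u v + ip S w v"
  unfolding ip_def by (simp add: ring_distribs sum.distrib)
lemma ip_add_r: "ip S v (\<lambda>i. u i + w i) = ip S v u + ip S v w"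
  unfolding ip_def by (simp add: ring_distribs sum.distrib)
lemma ip_diff_l: "ip S (\<lambda>i. u i - w i) v = ip S u v - ip S w v"
  unfolding ip_def by (simp add: ring_distribs sum_subtractf)
lemma ip_diff_r: "ip S v (\<lambda>i. u i - w i) = ip S v u - ip S v w"
  unfolding ip_def by (simp add: ring_distribs sum_subtractf)
lemma ip_cong: "(\<And>i. i \<in> S \<Longrightarrow> u i = u' i) \<Longrightarrow> (\<And>i. i \<in> S \<Longrightarrow> v i = v' i) \<Longrightarrow> ip S u v = ip S u' v'"
  unfolding ip_def by simp
lemma ip_scale: "ip S (\<lambda>i. k * u i) (\<lambda>i. k * v i) = cnj k * k * ip S u v"
  unfolding ip_def by (simp add: sum_distrib_left mult_ac)

lemma ip_self: "ip S u u = complex_of_real ((vnorm S u)\<^sup>2)"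
proof -
  have "ip S u u = (\<Sum>i\<in>S. complex_of_real ((cmod (u i))\<^sup>2))"
  proof -
    have "cnj z * z = complex_of_real ((cmod z)\<^sup>2)" for z
      using complex_norm_square[of z] by (simp add: mult.commute)
    then show ?thesis unfolding ip_def by simp
  qed
  then show ?thesis unfolding vnorm_def by (simp add: sum_nonneg)
qed

lemma ip_expand:
  assumes h1: "\<And>u v. ip S (G u) v = ip S u (G v)" and h2: "\<And>u v. ip S u (G (G v)) = ip S u v"
  shows "ip S (\<lambda>i. a i - G a i + b i + G b i) (\<lambda>i. a i - G a i + b i + G b i)
    = 2 * ip S a a - 2 * ip S a (G a) + 2 * ip S b b + 2 * ip S b (G b)"
  by (simp only: ip_add_l ip_add_r ip_diff_l ip_diff_r h1 h2) (simp add: algebra_simps)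

lemma swap_inner: "(\<Sum>s\<in>A. \<Sum>c\<in>B. \<Sum>t\<in>C. f s c t) = (\<Sum>s\<in>A. \<Sum>t\<in>C. \<Sum>c\<in>B. f s c t)"
  by (rule sum.cong[OF refl], rule sum.swap)

lemma gam_herm: "dirac_gammas \<gamma> \<Longrightarrow> \<nu> < 4 \<Longrightarrow> s < 4 \<Longrightarrow> t < 4 \<Longrightarrow> cnj (\<gamma> \<nu> s t) = \<gamma> \<nu> t s"
proof -
  assume a: "dirac_gammas \<gamma>" "\<nu> < 4" "s < 4" "t < 4"
  then have "\<gamma> \<nu> t s = cnj (\<gamma> \<nu> s t)" unfolding dirac_gammas_def by blast
  then show ?thesis by simp
qed

lemma gam_sq: "dirac_gammas \<gamma> \<Longrightarrow> \<nu> < 4 \<Longrightarrow> s < 4 \<Longrightarrow> t < 4 \<Longrightarrow> (\<Sum>u<4. \<gamma> \<nu> s u * \<gamma> \<nu> u t) = idm s t"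
proof -
  assume a: "dirac_gammas \<gamma>" "\<nu> < 4" "s < 4" "t < 4"
  then have "(\<Sum>u<4. \<gamma> \<nu> s u * \<gamma> \<nu> u t + \<gamma> \<nu> s u * \<gamma> \<nu> u t) = (if \<nu> = \<nu> \<and> s = t then 2 else 0)"
    unfolding dirac_gammas_def by blast
  moreover have "(\<Sum>u<4. \<gamma> \<nu> s u * \<gamma> \<nu> u t + \<gamma> \<nu> s u * \<gamma> \<nu> u t) = 2 * (\<Sum>u<4. \<gamma> \<nu> s u * \<gamma> \<nu> u t)"
    by (simp only: sum.distrib mult_2)
  ultimately have "2 * (\<Sum>u<4. \<gamma> \<nu> s u * \<gamma> \<nu> u t) = (if s = t then 2 else 0)"
    by simp
  then show ?thesis unfolding idm_def by (cases "s = t") auto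
qed

lemma K1:
  assumes g: "dirac_gammas \<gamma>" and \<nu>: "\<nu> < 4"
  shows "ip (indices L Nc) (Gm \<gamma> \<nu> u) v = ip (indices L Nc) u (Gm \<gamma> \<nu> v)"
proof -
  have "(\<Sum>s<4. \<Sum>c<Nc. cnj (\<Sum>t<4. \<gamma> \<nu> s t * u (x, t, c)) * v (x, s, c))
      = (\<Sum>s<4. \<Sum>c<Nc. cnj (u (x, s, c)) * (\<Sum>t<4. \<gamma> \<nu> s t * v (x, t, c)))" for x
  proof -
    have "(\<Sum>s<4. \<Sum>c<Nc. cnj (\<Sum>t<4. \<gamma> \<nu> s t * u (x, t, c)) * v (x, s, c))
        = (\<Sum>s<4. \<Sum>c<Nc. \<Sum>t<4. cnj (\<gamma> \<nu> s t) * cnj (u (x, t, c)) * v (x, s, c))"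
      by (simp add: sum_distrib_right)
    also have "\<dots> = (\<Sum>s<4. \<Sum>t<4. \<Sum>c<Nc. cnj (\<gamma> \<nu> s t) * cnj (u (x, t, c)) * v (x, s, c))"
      by (rule swap_inner)
    also have "\<dots> = (\<Sum>s<4. \<Sum>t<4. \<Sum>c<Nc. cnj (u (x, t, c)) * \<gamma> \<nu> t s * v (x, s, c))"
      using gam_herm[OF g \<nu>] by (intro sum.cong refl) (simp add: mult.commute)
    also have "\<dots> = (\<Sum>t<4. \<Sum>s<4. \<Sum>c<Nc. cnj (u (x, t, c)) * \<gamma> \<nu> t s * v (x, s, c))"
      by (rule sum.swap)
    also have "\<dots> = (\<Sum>t<4. \<Sum>c<Nc. \<Sum>s<4. cnj (u (x, t, c)) * \<gamma> \<nu> t s * v (x, s, c))"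
      by (rule swap_inner[symmetric])
    also have "\<dots> = (\<Sum>s<4. \<Sum>c<Nc. cnj (u (x, s, c)) * (\<Sum>t<4. \<gamma> \<nu> s t * v (x, t, c)))"
      by (simp add: sum_distrib_left mult.assoc)
    finally show ?thesis .
  qed
  then show ?thesis unfolding ip_def indices_def sum_I Gm_def by simp
qed

lemma K2:
  assumes g: "dirac_gammas \<gamma>" and \<nu>: "\<nu> < 4" and i: "i \<in> indices L Nc"
  shows "Gm \<gamma> \<nu> (Gm \<gamma> \<nu> v) i = v i"
proof -
  obtain x s c where ix: "i = (x, s, c)" and s: "s < 4" using i unfolding indices_def by auto
  have "Gm \<gamma> \<nu> (Gm \<gamma> \<nu> v) i = (\<Sum>t<4. \<Sum>t'<4. \<gamma> \<nu> s t * \<gamma> \<nu> t t' * v (x, t', c))"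
    unfolding ix Gm_def by (simp add: sum_distrib_left mult.assoc)
  also have "\<dots> = (\<Sum>t'<4. (\<Sum>t<4. \<gamma> \<nu> s t * \<gamma> \<nu> t t') * v (x, t', c))"
    by (subst sum.swap) (simp add: sum_distrib_right)
  also have "\<dots> = (\<Sum>t'<4. idm s t' * v (x, t', c))"
    using gam_sq[OF g \<nu> s] by simp
  also have "\<dots> = v i" using idm_sum[OF s] ix by simp
  finally show ?thesis .
qed

lemma K2': "dirac_gammas \<gamma> \<Longrightarrow> \<nu> < 4 \<Longrightarrow> ip (indices L Nc) u (Gm \<gamma> \<nu> (Gm \<gamma> \<nu> v)) = ip (indices L Nc) u v"
  by (rule ip_cong) (auto simp: K2)

lemma K4f: "Gm \<gamma> \<nu> (Vf L U \<nu> Nc u) = Vf L U \<nu> Nc (Gm \<gamma> \<nu> u)"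
proof (intro ext)
  fix i :: idx
  obtain x s c where ix: "i = (x, s, c)" by (cases i rule: prod_cases3)
  show "Gm \<gamma> \<nu> (Vf L U \<nu> Nc u) i = Vf L U \<nu> Nc (Gm \<gamma> \<nu> u) i"
  proof -
    have "(\<Sum>t<4. \<gamma> \<nu> s t * (\<Sum>d<Nc. U \<nu> x c d * u (fwd L \<nu> x, t, d)))
        = (\<Sum>t<4. \<Sum>d<Nc. U \<nu> x c d * (\<gamma> \<nu> s t * u (fwd L \<nu> x, t, d)))"
      by (simp add: sum_distrib_left mult.left_commute)
    also have "\<dots> = (\<Sum>d<Nc. \<Sum>t<4. U \<nu> x c d * (\<gamma> \<nu> s t * u (fwd L \<nu> x, t, d)))"
      by (rule sum.swap)
    also have "\<dots> = (\<Sum>d<Nc. U \<nu> x c d * (\<Sum>t<4. \<gamma> \<nu> s t * u (fwd L \<nu> x, t, d)))"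
      by (simp add: sum_distrib_left)
    finally show ?thesis unfolding ix Gm_def Vf_def by simp
  qed
qed

lemma K4b: "Gm \<gamma> \<nu> (Vb L U \<nu> Nc u) = Vb L U \<nu> Nc (Gm \<gamma> \<nu> u)"
proof (intro ext)
  fix i :: idx
  obtain x s c where ix: "i = (x, s, c)" by (cases i rule: prod_cases3)
  show "Gm \<gamma> \<nu> (Vb L U \<nu> Nc u) i = Vb L U \<nu> Nc (Gm \<gamma> \<nu> u) i"
  proof -
    have "(\<Sum>t<4. \<gamma> \<nu> s t * (\<Sum>d<Nc. cnj (U \<nu> (bwd L \<nu> x) d c) * u (bwd L \<nu> x, t, d)))
        = (\<Sum>t<4. \<Sum>d<Nc. cnj (U \<nu> (bwd L \<nu> x) d c) * (\<gamma> \<nu> s t * u (bwd L \<nu> x, t, d)))"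
      by (simp add: sum_distrib_left mult.left_commute)
    also have "\<dots> = (\<Sum>d<Nc. \<Sum>t<4. cnj (U \<nu> (bwd L \<nu> x) d c) * (\<gamma> \<nu> s t * u (bwd L \<nu> x, t, d)))"
      by (rule sum.swap)
    also have "\<dots> = (\<Sum>d<Nc. cnj (U \<nu> (bwd L \<nu> x) d c) * (\<Sum>t<4. \<gamma> \<nu> s t * u (bwd L \<nu> x, t, d)))"
      by (simp add: sum_distrib_left)
    finally show ?thesis unfolding ix Gm_def Vb_def by simp
  qed
qed

lemma colour:
  fixes n :: nat
  assumes W: "\<And>d d'. d < n \<Longrightarrow> d' < n \<Longrightarrow> (\<Sum>c<n. cnj (W c d) * W c d') = (if d = d' then 1 else 0)"
  shows "(\<Sum>c<n. cnj (\<Sum>d<n. W c d * z d) * (\<Sum>d<n. W c d * z' d)) = (\<Sum>d<n. cnj (z d) * z' d)"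
proof -
  have "(\<Sum>c<n. cnj (\<Sum>d<n. W c d * z d) * (\<Sum>d<n. W c d * z' d))
      = (\<Sum>c<n. \<Sum>d'<n. \<Sum>d<n. cnj (W c d) * W c d' * (cnj (z d) * z' d'))"
    by (simp add: sum_product mult_ac)
  also have "\<dots> = (\<Sum>d'<n. \<Sum>c<n. \<Sum>d<n. cnj (W c d) * W c d' * (cnj (z d) * z' d'))"
    by (rule sum.swap)
  also have "\<dots> = (\<Sum>d'<n. \<Sum>d<n. \<Sum>c<n. cnj (W c d) * W c d' * (cnj (z d) * z' d'))"
    by (intro sum.cong refl sum.swap)
  also have "\<dots> = (\<Sum>d'<n. \<Sum>d<n. (if d = d' then cnj (z d) * z' d' else 0))"
    by (intro sum.cong refl) (simp add: W flip: sum_distrib_right)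
  also have "\<dots> = (\<Sum>d<n. cnj (z d) * z' d)"
    by (intro sum.cong refl) (subst sum.delta, auto)
  finally show ?thesis .
qed

lemma K5f:
  assumes gauge: "gauge_field L Nc U" and \<nu>: "\<nu> < 4" and L: "0 < L \<nu>"
  shows "ip (indices L Nc) (Vf L U \<nu> Nc u) (Vf L U \<nu> Nc v) = ip (indices L Nc) u v"
proof -
  have "(\<Sum>s<4. \<Sum>c<Nc. cnj (Vf L U \<nu> Nc u (x, s, c)) * Vf L U \<nu> Nc v (x, s, c))
      = (\<Sum>s<4. \<Sum>d<Nc. cnj (u (fwd L \<nu> x, s, d)) * v (fwd L \<nu> x, s, d))" if x: "x \<in> sites L" for x
  proof -
    have un: "unitary_mat Nc (U \<nu> x)" using gauge x \<nu> unfolding gauge_field_def by auto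
    have e: "Vf L U \<nu> Nc w (x, s, c) = (\<Sum>d<Nc. U \<nu> x c d * w (fwd L \<nu> x, s, d))" for w s c
      by (simp add: Vf_def)
    show ?thesis unfolding e
      by (rule sum.cong[OF refl], rule colour) (use un in \<open>auto simp: unitary_mat_def\<close>)
  qed
  then have "ip (indices L Nc) (Vf L U \<nu> Nc u) (Vf L U \<nu> Nc v)
      = (\<Sum>x\<in>sites L. (\<lambda>y. \<Sum>s<4. \<Sum>d<Nc. cnj (u (y, s, d)) * v (y, s, d)) (fwd L \<nu> x))"
    unfolding ip_def indices_def sum_I by simp
  also have "\<dots> = (\<Sum>x\<in>sites L. \<Sum>s<4. \<Sum>d<Nc. cnj (u (x, s, d)) * v (x, s, d))"
    by (rule sum_fwd[where f = "\<lambda>y. \<Sum>s<4. \<Sum>d<Nc. cnj (u (y, s, d)) * v (y, s, d)", of \<nu> L, OF \<nu> L])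
  finally show ?thesis unfolding ip_def indices_def sum_I .
qed

lemma K5b:
  assumes gauge: "gauge_field L Nc U" and \<nu>: "\<nu> < 4" and L: "0 < L \<nu>"
  shows "ip (indices L Nc) (Vb L U \<nu> Nc u) (Vb L U \<nu> Nc v) = ip (indices L Nc) u v"
proof -
  have "(\<Sum>s<4. \<Sum>c<Nc. cnj (Vb L U \<nu> Nc u (x, s, c)) * Vb L U \<nu> Nc v (x, s, c))
      = (\<Sum>s<4. \<Sum>d<Nc. cnj (u (bwd L \<nu> x, s, d)) * v (bwd L \<nu> x, s, d))" if x: "x \<in> sites L" for x
  proof -
    have un: "unitary_mat Nc (U \<nu> (bwd L \<nu> x))"
      using gauge bwd_in[OF \<nu> L x] \<nu> unfolding gauge_field_def by auto
    have e: "Vb L U \<nu> Nc w (x, s, c) = (\<Sum>d<Nc. (\<lambda>c d. cnj (U \<nu> (bwd L \<nu> x) d c)) c d * w (bwd L \<nu> x, s, d))" for w s c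
      by (simp add: Vb_def)
    show ?thesis unfolding e
      by (rule sum.cong[OF refl], rule colour) (use un in \<open>auto simp: unitary_mat_def\<close>)
  qed
  then have "ip (indices L Nc) (Vb L U \<nu> Nc u) (Vb L U \<nu> Nc v)
      = (\<Sum>x\<in>sites L. (\<lambda>y. \<Sum>s<4. \<Sum>d<Nc. cnj (u (y, s, d)) * v (y, s, d)) (bwd L \<nu> x))"
    unfolding ip_def indices_def sum_I by simp
  also have "\<dots> = (\<Sum>x\<in>sites L. \<Sum>s<4. \<Sum>d<Nc. cnj (u (x, s, d)) * v (x, s, d))"
    by (rule sum_bwd[where f = "\<lambda>y. \<Sum>s<4. \<Sum>d<Nc. cnj (u (y, s, d)) * v (y, s, d)", of \<nu> L, OF \<nu> L])
  finally show ?thesis unfolding ip_def indices_def sum_I .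
qed

lemma hop_norm:
  assumes gam: "dirac_gammas \<gamma>" and gauge: "gauge_field L Nc U" and \<nu>: "\<nu> < 4"
    and L: "0 < L \<nu>" and k: "0 \<le> \<kappa>"
  shows "vnorm (indices L Nc) (mat_apply (indices L Nc) (hopm L \<kappa> \<gamma> U \<nu>) w) \<le> 2 * \<kappa> * vnorm (indices L Nc) w"
proof -
  let ?I = "indices L Nc"
  let ?h = "mat_apply ?I (hopm L \<kappa> \<gamma> U \<nu>) w"
  let ?a = "Vf L U \<nu> Nc w" and ?b = "Vb L U \<nu> Nc w" and ?G = "Gm \<gamma> \<nu>"
  let ?k = "complex_of_real \<kappa>"
  have hd: "?h i = ?k * (?a i - ?G ?a i + ?b i + ?G ?b i)" if i: "i \<in> ?I" for i
  proof -
    obtain x s c where ix: "i = (x, s, c)" and x: "x \<in> sites L" and s: "s < 4"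
      using i unfolding indices_def by auto
    show ?thesis unfolding ix by (rule hop_decomp[OF x s \<nu> L])
  qed
  have "ip ?I ?h ?h = ip ?I (\<lambda>i. ?k * (?a i - ?G ?a i + ?b i + ?G ?b i)) (\<lambda>i. ?k * (?a i - ?G ?a i + ?b i + ?G ?b i))"
    by (rule ip_cong) (simp_all add: hd)
  also have "\<dots> = cnj ?k * ?k * ip ?I (\<lambda>i. ?a i - ?G ?a i + ?b i + ?G ?b i) (\<lambda>i. ?a i - ?G ?a i + ?b i + ?G ?b i)"
    by (rule ip_scale)
  also have "ip ?I (\<lambda>i. ?a i - ?G ?a i + ?b i + ?G ?b i) (\<lambda>i. ?a i - ?G ?a i + ?b i + ?G ?b i)
      = 2 * ip ?I ?a ?a - 2 * ip ?I ?a (?G ?a) + 2 * ip ?I ?b ?b + 2 * ip ?I ?b (?G ?b)"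
    by (rule ip_expand) (simp_all add: K1[OF gam \<nu>] K2'[OF gam \<nu>])
  also have "ip ?I ?a ?a = ip ?I w w" by (rule K5f[OF gauge \<nu> L])
  also have "ip ?I ?b ?b = ip ?I w w" by (rule K5b[OF gauge \<nu> L])
  also have "ip ?I ?a (?G ?a) = ip ?I w (?G w)" unfolding K4f by (rule K5f[OF gauge \<nu> L])
  also have "ip ?I ?b (?G ?b) = ip ?I w (?G w)" unfolding K4b by (rule K5b[OF gauge \<nu> L])
  finally have "ip ?I ?h ?h = cnj ?k * ?k * (4 * ip ?I w w)" by (simp add: algebra_simps)
  then have "complex_of_real ((vnorm ?I ?h)\<^sup>2) = complex_of_real ((2 * \<kappa> * vnorm ?I w)\<^sup>2)"
    unfolding ip_self by (simp add: power2_eq_square algebra_simps)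
  then have "(vnorm ?I ?h)\<^sup>2 = (2 * \<kappa> * vnorm ?I w)\<^sup>2" using of_real_eq_iff by blast
  moreover have "0 \<le> 2 * \<kappa> * vnorm ?I w" using k vnorm_nonneg[of ?I w] by simp
  ultimately have "vnorm ?I ?h = 2 * \<kappa> * vnorm ?I w"
    using power2_eq_iff_nonneg[OF vnorm_nonneg] by blast
  then show ?thesis by simp
qed

lemma hop_support: "hopm L \<kappa> \<gamma> U \<nu> (x, s, c) (y, t, d) \<noteq> 0 \<Longrightarrow> y = fwd L \<nu> x \<or> y = bwd L \<nu> x"
  unfolding hopm_def by (auto split: if_splits)

lemma block_opb:
  fixes X Y :: "idx set"
  assumes XI: "X \<subseteq> indices L Nc" and YI: "Y \<subseteq> indices L Nc" and F: "F \<subseteq> {..<4}"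
    and zero: "\<And>\<nu> i j. \<nu> < 4 \<Longrightarrow> \<nu> \<notin> F \<Longrightarrow> i \<in> X \<Longrightarrow> j \<in> Y \<Longrightarrow> hopm L \<kappa> \<gamma> U \<nu> i j = 0"
    and hn: "\<And>\<nu> w. \<nu> \<in> F \<Longrightarrow> vnorm (indices L Nc) (mat_apply (indices L Nc) (hopm L \<kappa> \<gamma> U \<nu>) w)
        \<le> 2 * \<kappa> * vnorm (indices L Nc) w"
  shows "opb X Y (blk X Y (wilson_hop L \<kappa> \<gamma> U)) (2 * \<kappa> * card F)"
  unfolding opb_def
proof
  fix v :: "idx \<Rightarrow> complex"
  let ?I = "indices L Nc"
  have finI: "finite ?I" by (rule finite_indices)
  have finY: "finite Y" using finite_subset[OF YI finI] .
  define w where "w = (\<lambda>j. if j \<in> Y then v j else 0)"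
  have ma: "mat_apply Y (blk X Y (wilson_hop L \<kappa> \<gamma> U)) v i
      = (\<Sum>\<nu>\<in>F. mat_apply ?I (hopm L \<kappa> \<gamma> U \<nu>) w i)" if i: "i \<in> X" for i
  proof -
    have "mat_apply Y (blk X Y (wilson_hop L \<kappa> \<gamma> U)) v i
        = (\<Sum>j\<in>Y. \<Sum>\<nu><4. hopm L \<kappa> \<gamma> U \<nu> i j * v j)"
      unfolding mat_apply_def blk_def wilson_sum using i by (simp add: sum_distrib_right)
    also have "\<dots> = (\<Sum>\<nu><4. \<Sum>j\<in>Y. hopm L \<kappa> \<gamma> U \<nu> i j * v j)" by (rule sum.swap)
    also have "\<dots> = (\<Sum>\<nu>\<in>F. \<Sum>j\<in>Y. hopm L \<kappa> \<gamma> U \<nu> i j * v j)"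
      by (rule sum.mono_neutral_right) (use F zero i in auto)
    also have "\<dots> = (\<Sum>\<nu>\<in>F. mat_apply ?I (hopm L \<kappa> \<gamma> U \<nu>) w i)"
    proof (rule sum.cong[OF refl])
      fix \<nu> assume "\<nu> \<in> F"
      have "mat_apply ?I (hopm L \<kappa> \<gamma> U \<nu>) w i = (\<Sum>j\<in>?I. if j \<in> Y then hopm L \<kappa> \<gamma> U \<nu> i j * v j else 0)"
        unfolding mat_apply_def w_def by (rule sum.cong) auto
      also have "\<dots> = (\<Sum>j\<in>?I \<inter> Y. hopm L \<kappa> \<gamma> U \<nu> i j * v j)"
        by (simp add: sum.inter_restrict[OF finI]) 
      also have "?I \<inter> Y = Y" using YI by auto
      finally show "(\<Sum>j\<in>Y. hopm L \<kappa> \<gamma> U \<nu> i j * v j) = mat_apply ?I (hopm L \<kappa> \<gamma> U \<nu>) w i" by simp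
    qed
    finally show ?thesis .
  qed
  have wv: "vnorm ?I w = vnorm Y v"
  proof -
    have "(\<Sum>j\<in>?I. (cmod (w j))\<^sup>2) = (\<Sum>j\<in>?I. if j \<in> Y then (cmod (v j))\<^sup>2 else 0)"
      unfolding w_def by (rule sum.cong) auto
    also have "\<dots> = (\<Sum>j\<in>?I \<inter> Y. (cmod (v j))\<^sup>2)"
      by (simp add: sum.inter_restrict[OF finI])
    also have "?I \<inter> Y = Y" using YI by auto
    finally show ?thesis unfolding vnorm_def by simp
  qed
  have "vnorm X (mat_apply Y (blk X Y (wilson_hop L \<kappa> \<gamma> U)) v)
      = vnorm X (\<lambda>i. \<Sum>\<nu>\<in>F. mat_apply ?I (hopm L \<kappa> \<gamma> U \<nu>) w i)"
    by (rule vnorm_cong) (rule ma)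
  also have "\<dots> \<le> (\<Sum>\<nu>\<in>F. vnorm X (mat_apply ?I (hopm L \<kappa> \<gamma> U \<nu>) w))" by (rule vnorm_sum)
  also have "\<dots> \<le> (\<Sum>\<nu>\<in>F. 2 * \<kappa> * vnorm ?I w)"
  proof (rule sum_mono)
    fix \<nu> assume "\<nu> \<in> F"
    have "vnorm X (mat_apply ?I (hopm L \<kappa> \<gamma> U \<nu>) w) \<le> vnorm ?I (mat_apply ?I (hopm L \<kappa> \<gamma> U \<nu>) w)"
      by (rule vnorm_subset[OF finI XI])
    also have "\<dots> \<le> 2 * \<kappa> * vnorm ?I w" by (rule hn) fact
    finally show "vnorm X (mat_apply ?I (hopm L \<kappa> \<gamma> U \<nu>) w) \<le> 2 * \<kappa> * vnorm ?I w" .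
  qed
  also have "\<dots> = 2 * \<kappa> * real (card F) * vnorm Y v" using wv by simp
  finally show "vnorm X (mat_apply Y (blk X Y (wilson_hop L \<kappa> \<gamma> U)) v) \<le> 2 * \<kappa> * real (card F) * vnorm Y v" .
qed

theorem mainTheorem1:
  fixes L :: "nat \<Rightarrow> nat" and Nc :: nat and \<mu> :: nat and \<kappa> :: real
    and \<gamma> :: "nat \<Rightarrow> nat \<Rightarrow> nat \<Rightarrow> complex"
    and U :: "nat \<Rightarrow> (nat \<Rightarrow> nat) \<Rightarrow> nat \<Rightarrow> nat \<Rightarrow> complex"
  assumes L_pos: "\<forall>\<nu><4. 0 < L \<nu>"
    and mu: "\<mu> < 4" and L_even: "even (L \<mu>)"
    and Nc: "0 < Nc"
    and gam: "dirac_gammas \<gamma>"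
    and gauge: "gauge_field L Nc U"
    and kappa: "0 < \<kappa>" "\<kappa> \<le> 1/8"
  shows "let M = wilson_hop L \<kappa> \<gamma> U; B = even_part L Nc \<mu>; R = odd_part L Nc \<mu> in
      opnorm R R (blk R R M) < 1
    \<and> invertible_on R (\<lambda>i j. blk R R idm i j - blk R R M i j)
    \<and> (\<forall>i\<in>R. \<forall>j\<in>R. (\<lambda>l. mat_pow R (blk R R M) l i j) sums res_inv R M i j)
    \<and> nonneg_on B (schur B R M)
    \<and> opnorm B B (eff_hop B R M (geo_full R M)) \<le> 1
    \<and> (\<forall>k\<ge>1. nonneg_on B (schur_approx B R M k)
         \<and> opnorm B B (eff_hop B R M (geo_part R M k)) \<le> 1 - 1/4 * (3/4) ^ k
         \<and> invertible_on B (schur_approx B R M k)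
         \<and> opnorm B B (\<lambda>i j. blk B B idm i j
              - mat_mult B (inv_on B (schur_approx B R M k)) (schur B R M) i j) \<le> 1)"
proof -
  let ?M = "wilson_hop L \<kappa> \<gamma> U" and ?B = "even_part L Nc \<mu>" and ?R = "odd_part L Nc \<mu>"
  let ?I = "indices L Nc" and ?F = "{..<4::nat} - {\<mu>}"
  have BI: "?B \<subseteq> ?I" unfolding even_part_def by auto
  have RI: "?R \<subseteq> ?I" unfolding odd_part_def by auto
  have finB: "finite ?B" using finite_subset[OF BI finite_indices] .
  have finR: "finite ?R" using finite_subset[OF RI finite_indices] .
  have hn: "vnorm ?I (mat_apply ?I (hopm L \<kappa> \<gamma> U \<nu>) w) \<le> 2 * \<kappa> * vnorm ?I w" if "\<nu> < 4" for \<nu> w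
    using hop_norm[OF gam gauge that] L_pos that kappa by auto
  have cF: "card ?F = 3" using mu by (simp add: card_Diff_singleton)
  have same: "hopm L \<kappa> \<gamma> U \<nu> i j = 0"
    if "\<nu> < 4" "\<nu> \<notin> ?F" "i \<in> ?I" "j \<in> ?I" "even (fst i \<mu>) = even (fst j \<mu>)" for \<nu> i j
  proof (rule ccontr)
    assume nz: "hopm L \<kappa> \<gamma> U \<nu> i j \<noteq> 0"
    obtain x s c where ix: "i = (x, s, c)" by (cases i rule: prod_cases3)
    obtain y t d where jy: "j = (y, t, d)" by (cases j rule: prod_cases3)
    have x: "x \<in> sites L" using that(3) ix unfolding indices_def by auto
    have nu: "\<nu> = \<mu>" using that(1,2) by auto
    have "y = fwd L \<mu> x \<or> y = bwd L \<mu> x" using hop_support[of L \<kappa> \<gamma> U \<nu> x s c y t d] nz ix jy nu by simp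
    then have "even (y \<mu>) \<longleftrightarrow> odd (x \<mu>)" using fwd_parity[OF mu L_even x] bwd_parity[OF mu L_even x] by auto
    then show False using that(5) ix jy by simp
  qed
  have diff: "hopm L \<kappa> \<gamma> U \<nu> i j = 0"
    if "\<nu> < 4" "\<nu> \<notin> {\<mu>}" "even (fst i \<mu>) \<noteq> even (fst j \<mu>)" for \<nu> i j
  proof (rule ccontr)
    assume nz: "hopm L \<kappa> \<gamma> U \<nu> i j \<noteq> 0"
    obtain x s c where ix: "i = (x, s, c)" by (cases i rule: prod_cases3)
    obtain y t d where jy: "j = (y, t, d)" by (cases j rule: prod_cases3)
    have nu: "\<nu> \<noteq> \<mu>" using that(2) by auto
    have "y = fwd L \<nu> x \<or> y = bwd L \<nu> x" using hop_support[of L \<kappa> \<gamma> U \<nu> x s c y t d] nz ix jy by simp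
    then have "y \<mu> = x \<mu>" using fwd_other[OF nu] bwd_other[OF nu] by auto
    then show False using that(3) ix jy by simp
  qed
  have F4: "?F \<subseteq> {..<4}" by auto
  have M4: "{\<mu>} \<subseteq> {..<4::nat}" using mu by auto
  have rr: "opb ?R ?R (blk ?R ?R ?M) (3/4)"
  proof (rule opb_mono)
    show "opb ?R ?R (blk ?R ?R ?M) (2 * \<kappa> * card ?F)"
      by (rule block_opb[OF RI RI F4]) (use same RI in \<open>auto simp: odd_part_def intro: hn\<close>)
    show "2 * \<kappa> * card ?F \<le> 3/4" using cF kappa by simp
  qed
  have bb: "opb ?B ?B (blk ?B ?B ?M) (3/4)"
  proof (rule opb_mono)
    show "opb ?B ?B (blk ?B ?B ?M) (2 * \<kappa> * card ?F)"
      by (rule block_opb[OF BI BI F4]) (use same BI in \<open>auto simp: even_part_def intro: hn\<close>)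
    show "2 * \<kappa> * card ?F \<le> 3/4" using cF kappa by simp
  qed
  have br: "opb ?B ?R (blk ?B ?R ?M) (1/4)"
  proof (rule opb_mono)
    show "opb ?B ?R (blk ?B ?R ?M) (2 * \<kappa> * card {\<mu>})"
      by (rule block_opb[OF BI RI M4]) (use diff mu in \<open>auto simp: even_part_def odd_part_def intro: hn\<close>)
    show "2 * \<kappa> * card {\<mu>} \<le> 1/4" using kappa by simp
  qed
  have rb: "opb ?R ?B (blk ?R ?B ?M) (1/4)"
  proof (rule opb_mono)
    show "opb ?R ?B (blk ?R ?B ?M) (2 * \<kappa> * card {\<mu>})"
      by (rule block_opb[OF RI BI M4]) (use diff mu in \<open>auto simp: even_part_def odd_part_def intro: hn\<close>)
    show "2 * \<kappa> * card {\<mu>} \<le> 1/4" using kappa by simp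
  qed
  show ?thesis unfolding Let_def by (rule schur_main[OF finB finR rr bb br rb])
qed

end
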